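(* Let $R\in(0,1)$ and let $c\colon[R,1]\to(0,\infty)$ be $C^{1,1}$ and satisfy the Herglotz condition $\frac{d}{dr}\left(\frac{r}{c(r)}\right)>0$. For a Lipschitz continuous $\lambda\colon[R,1]\to\mathbb C$, the function $$\Lambda^\lambda(r;x)=\cosh\left(\int_x^r\lambda(u)H(u;x)\,du\right)$$ is Lipschitz continuous on $\{(r,x);R\leq x<r\leq1\}$. It extends continuously to the diagonal $\{(r,r);R\leq r\leq1\}$ and has the constant value $1$ there.
   Context: $H(r;z)=\frac1{c(r)}\left(1-\left(\frac{z\,c(r)}{r\,c(z)}\right)^2\right)^{-1/2}$ for $R\leq z<r\leq1$. *)

theory Defs
  imports "HOL-Analysis.Analysis"
begin

definition H :: "(real \<Rightarrow> real) \<Rightarrow> real \<Rightarrow> real \<Rightarrow> real" where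
  "H c r z = (1 / c r) * (1 - (z * c r / (r * c z))\<^sup>2) powr (-1/2)"

text \<open>Lambda^lambda(r;x) = cosh (integral from x to r of lambda(u) H(u;x) du)
  (Henstock-Kurzweil integral, which covers the improper integral at u = x).\<close>
definition Lam :: "(real \<Rightarrow> real) \<Rightarrow> (real \<Rightarrow> complex) \<Rightarrow> real \<Rightarrow> real \<Rightarrow> complex" where
  "Lam c lam r x = cosh (integral {x..r} (\<lambda>u. lam u * complex_of_real (H c u x)))"

end

theory Submission
  imports Defs
begin



lemma sinh_bound:
  fixes z :: complex assumes "norm z \<le> B"
  shows "norm (sinh z) \<le> exp B * norm z"
proof -
  have "norm (sinh z - sinh 0) \<le> exp B * norm (z - 0)"
  proof (rule field_differentiable_bound[where S="cball 0 B" and f'=cosh])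
    fix w :: complex assume w: "w \<in> cball 0 B"
    show "(sinh has_field_derivative cosh w) (at w within cball 0 B)"
      by (auto intro!: derivative_eq_intros)
    have "norm (cosh w) \<le> (norm (exp w) + norm (exp (-w))) / 2"
      using norm_triangle_ineq[of "exp w" "exp (-w)"] unfolding cosh_def
      by (simp add: divide_right_mono del: norm_exp_eq_Re)
    also have "\<dots> \<le> (exp (norm w) + exp (norm (-w))) / 2"
      by (intro divide_right_mono add_mono norm_exp) auto
    also have "\<dots> \<le> exp B" using w by simp
    finally show "norm (cosh w) \<le> exp B" .
  qed (use assms in \<open>auto intro: order_trans[OF norm_ge_zero]\<close>)
  thus ?thesis by simp
qed

lemma cosh_diff_prod:
  fixes a b :: complex
  shows "cosh a - cosh b = 2 * sinh ((a+b)/2) * sinh ((a-b)/2)"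
proof -
  have "cosh a = cosh ((a+b)/2 + (a-b)/2)" by (simp add: field_simps)
  moreover have "cosh b = cosh ((a+b)/2 - (a-b)/2)" by (simp add: field_simps)
  ultimately show ?thesis by (simp add: cosh_add cosh_diff)
qed

lemma cosh_lip:
  fixes a b :: complex assumes "norm a \<le> B" "norm b \<le> B"
  shows "norm (cosh a - cosh b) \<le> exp B ^ 2 / 2 * norm (a^2 - b^2)"
proof -
  have p: "norm ((a+b)/2) \<le> B" using assms norm_triangle_ineq[of a b] by (simp add: norm_divide)
  have q: "norm ((a-b)/2) \<le> B" using assms norm_triangle_ineq4[of a b] by (simp add: norm_divide)
  have "norm (cosh a - cosh b) = 2 * norm (sinh ((a+b)/2)) * norm (sinh ((a-b)/2))"
    by (simp add: cosh_diff_prod norm_mult)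
  also have "\<dots> \<le> 2 * (exp B * norm ((a+b)/2)) * (exp B * norm ((a-b)/2))"
    by (intro mult_mono mult_left_mono sinh_bound p q) auto
  also have "\<dots> = exp B ^ 2 / 2 * (norm (a+b) * norm (a-b))"
    by (simp add: norm_divide power2_eq_square)
  also have "norm (a+b) * norm (a-b) = norm (a^2 - b^2)"
    by (simp add: norm_mult[symmetric] power2_eq_square algebra_simps)
  finally show ?thesis .
qed


definition BL :: "'a::metric_space set \<Rightarrow> ('a \<Rightarrow> 'b::real_normed_vector) \<Rightarrow> bool" where
  "BL S f \<longleftrightarrow> (\<exists>B. \<forall>p\<in>S. norm (f p) \<le> B) \<and> (\<exists>K. K-lipschitz_on S f)"

lemma BLE:
  assumes "BL S f"
  obtains B K where "B \<ge> 0" "K \<ge> 0" "\<And>p. p \<in> S \<Longrightarrow> norm (f p) \<le> B"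
    "\<And>p q. p \<in> S \<Longrightarrow> q \<in> S \<Longrightarrow> norm (f p - f q) \<le> K * dist p q"
proof -
  from assms obtain B K where B: "\<forall>p\<in>S. norm (f p) \<le> B" and K: "K-lipschitz_on S f"
    unfolding BL_def by blast
  show ?thesis
  proof (rule that[of "max B 0" K])
    show "0 \<le> K" using K lipschitz_on_nonneg by blast
    show "norm (f p) \<le> max B 0" if "p \<in> S" for p using B that by force
    show "norm (f p - f q) \<le> K * dist p q" if "p \<in> S" "q \<in> S" for p q
      using lipschitz_onD[OF K that] by (simp add: dist_norm)
  qed simp
qed

lemma BLI:
  assumes "\<And>p. p \<in> S \<Longrightarrow> norm (f p) \<le> B"
    "\<And>p q. p \<in> S \<Longrightarrow> q \<in> S \<Longrightarrow> norm (f p - f q) \<le> K * dist p q" "K \<ge> 0"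
  shows "BL S f"
  unfolding BL_def
proof (intro conjI exI)
  show "\<forall>p\<in>S. norm (f p) \<le> B" using assms(1) by blast
  show "K-lipschitz_on S f" by (rule lipschitz_onI) (use assms(2,3) in \<open>auto simp: dist_norm\<close>)
qed

lemma BL_const: "BL S (\<lambda>_. c)"
  by (rule BLI[of _ _ "norm c" 0]) auto

lemma BL_add:
  assumes "BL S f" "BL S g" shows "BL S (\<lambda>p. f p + g p)"
proof -
  obtain B1 K1 where 1: "B1 \<ge> 0" "K1 \<ge> 0" "\<And>p. p \<in> S \<Longrightarrow> norm (f p) \<le> B1"
    "\<And>p q. p \<in> S \<Longrightarrow> q \<in> S \<Longrightarrow> norm (f p - f q) \<le> K1 * dist p q" using BLE[OF assms(1)] by blast
  obtain B2 K2 where 2: "B2 \<ge> 0" "K2 \<ge> 0" "\<And>p. p \<in> S \<Longrightarrow> norm (g p) \<le> B2"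
    "\<And>p q. p \<in> S \<Longrightarrow> q \<in> S \<Longrightarrow> norm (g p - g q) \<le> K2 * dist p q" using BLE[OF assms(2)] by blast
  show ?thesis
  proof (rule BLI[of _ _ "B1 + B2" "K1 + K2"])
    fix p assume p: "p \<in> S"
    have "norm (f p + g p) \<le> norm (f p) + norm (g p)" by (rule norm_triangle_ineq)
    also have "\<dots> \<le> B1 + B2" using 1(3)[OF p] 2(3)[OF p] by (rule add_mono)
    finally show "norm (f p + g p) \<le> B1 + B2" .
  next
    fix p q assume pq: "p \<in> S" "q \<in> S"
    have "norm (f p + g p - (f q + g q)) \<le> norm (f p - f q) + norm (g p - g q)"
      using norm_triangle_ineq[of "f p - f q" "g p - g q"] by (simp add: algebra_simps)
    also have "\<dots> \<le> K1 * dist p q + K2 * dist p q" using 1(4) 2(4) pq by (intro add_mono) auto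
    finally show "norm (f p + g p - (f q + g q)) \<le> (K1 + K2) * dist p q" by (simp add: algebra_simps)
  qed (use 1 2 in auto)
qed

lemma BL_neg: assumes "BL S f" shows "BL S (\<lambda>p. - f p)"
proof -
  obtain B1 K1 where 1: "B1 \<ge> 0" "K1 \<ge> 0" "\<And>p. p \<in> S \<Longrightarrow> norm (f p) \<le> B1"
    "\<And>p q. p \<in> S \<Longrightarrow> q \<in> S \<Longrightarrow> norm (f p - f q) \<le> K1 * dist p q" using BLE[OF assms(1)] by blast
  have e: "norm (- f p - - f q) = norm (f p - f q)" for p q
  proof -
    have "- f p - - f q = - (f p - f q)" by simp
    thus ?thesis by (simp only: norm_minus_cancel)
  qed
  show ?thesis
    by (rule BLI[of _ _ B1 K1]) (use 1 in \<open>auto simp: norm_minus_commute\<close>)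
qed

lemma BL_diff:
  assumes "BL S f" "BL S g" shows "BL S (\<lambda>p. f p - g p)"
  using BL_add[OF assms(1) BL_neg[OF assms(2)]] by simp

lemma BL_mult:
  fixes f g :: "_ \<Rightarrow> 'b::real_normed_algebra"
  assumes "BL S f" "BL S g" shows "BL S (\<lambda>p. f p * g p)"
proof -
  obtain B1 K1 where 1: "B1 \<ge> 0" "K1 \<ge> 0" "\<And>p. p \<in> S \<Longrightarrow> norm (f p) \<le> B1"
    "\<And>p q. p \<in> S \<Longrightarrow> q \<in> S \<Longrightarrow> norm (f p - f q) \<le> K1 * dist p q" using BLE[OF assms(1)] by blast
  obtain B2 K2 where 2: "B2 \<ge> 0" "K2 \<ge> 0" "\<And>p. p \<in> S \<Longrightarrow> norm (g p) \<le> B2"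
    "\<And>p q. p \<in> S \<Longrightarrow> q \<in> S \<Longrightarrow> norm (g p - g q) \<le> K2 * dist p q" using BLE[OF assms(2)] by blast
  show ?thesis
  proof (rule BLI[of _ _ "B1 * B2" "B1 * K2 + K1 * B2"])
    fix p assume p: "p \<in> S"
    have "norm (f p * g p) \<le> norm (f p) * norm (g p)" by (rule norm_mult_ineq)
    also have "\<dots> \<le> B1 * B2" using 1(3)[OF p] 2(3)[OF p] 1(1) 2(1) by (intro mult_mono) auto
    finally show "norm (f p * g p) \<le> B1 * B2" .
  next
    fix p q assume pq: "p \<in> S" "q \<in> S"
    have "f p * g p - f q * g q = f p * (g p - g q) + (f p - f q) * g q" by (simp add: algebra_simps)
    hence "norm (f p * g p - f q * g q) \<le> norm (f p * (g p - g q)) + norm ((f p - f q) * g q)"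
      by (metis norm_triangle_ineq)
    also have "\<dots> \<le> norm (f p) * norm (g p - g q) + norm (f p - f q) * norm (g q)"
      by (intro add_mono norm_mult_ineq)
    also have "\<dots> \<le> B1 * (K2 * dist p q) + (K1 * dist p q) * B2"
      using 1 2 pq by (intro add_mono mult_mono) auto
    finally show "norm (f p * g p - f q * g q) \<le> (B1 * K2 + K1 * B2) * dist p q" by (simp add: algebra_simps)
  qed (use 1 2 in auto)
qed

lemma BL_inverse:
  fixes f :: "_ \<Rightarrow> real"
  assumes "BL S f" "m > 0" "\<And>p. p \<in> S \<Longrightarrow> f p \<ge> m" shows "BL S (\<lambda>p. 1 / f p)"
proof -
  obtain B1 K1 where 1: "B1 \<ge> 0" "K1 \<ge> 0" "\<And>p. p \<in> S \<Longrightarrow> norm (f p) \<le> B1"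
    "\<And>p q. p \<in> S \<Longrightarrow> q \<in> S \<Longrightarrow> norm (f p - f q) \<le> K1 * dist p q" using BLE[OF assms(1)] by blast
  show ?thesis
  proof (rule BLI[of _ _ "1/m" "K1 / m^2"])
    fix p assume p: "p \<in> S"
    show "norm (1 / f p) \<le> 1 / m" using assms(2) assms(3)[OF p] by (simp add: frac_le)
  next
    fix p q assume pq: "p \<in> S" "q \<in> S"
    have fp: "f p \<ge> m" "f q \<ge> m" using assms(3) pq by auto
    have "1 / f p - 1 / f q = (f q - f p) / (f p * f q)" using fp assms(2) by (simp add: field_simps)
    hence "norm (1 / f p - 1 / f q) = norm (f p - f q) / (f p * f q)"
      using fp assms(2) by (simp add: abs_minus_commute)
    also have "\<dots> \<le> (K1 * dist p q) / (m * m)"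
      using fp assms(2) 1(4)[OF pq] by (intro frac_le mult_mono) auto
    finally show "norm (1 / f p - 1 / f q) \<le> K1 / m^2 * dist p q" by (simp add: power2_eq_square)
  qed (use 1 assms in auto)
qed

lemma BL_sqrt:
  fixes f :: "_ \<Rightarrow> real"
  assumes "BL S f" "m > 0" "\<And>p. p \<in> S \<Longrightarrow> f p \<ge> m" shows "BL S (\<lambda>p. sqrt (f p))"
proof -
  obtain B1 K1 where 1: "B1 \<ge> 0" "K1 \<ge> 0" "\<And>p. p \<in> S \<Longrightarrow> norm (f p) \<le> B1"
    "\<And>p q. p \<in> S \<Longrightarrow> q \<in> S \<Longrightarrow> norm (f p - f q) \<le> K1 * dist p q" using BLE[OF assms(1)] by blast
  show ?thesis
  proof (rule BLI[of _ _ "sqrt B1" "K1 / (2 * sqrt m)"])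
    fix p assume p: "p \<in> S"
    have "f p \<le> B1" "f p > 0" using 1(3)[OF p] assms(2) assms(3)[OF p] by auto
    thus "norm (sqrt (f p)) \<le> sqrt B1" by simp
  next
    fix p q assume pq: "p \<in> S" "q \<in> S"
    have fp: "f p \<ge> m" "f q \<ge> m" using assms(3) pq by auto
    have s: "sqrt (f p) \<ge> sqrt m" "sqrt (f q) \<ge> sqrt m" using fp by auto
    have sm: "sqrt m > 0" using assms(2) by simp
    have E: "(sqrt (f p) - sqrt (f q)) * (sqrt (f p) + sqrt (f q)) = f p - f q"
      using fp assms(2) by (simp add: algebra_simps)
    have pos: "sqrt (f p) + sqrt (f q) > 0" using s sm by linarith
    have "sqrt (f p) - sqrt (f q) = (f p - f q) / (sqrt (f p) + sqrt (f q))"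
      using E pos by (simp add: field_simps)
    hence "norm (sqrt (f p) - sqrt (f q)) = norm (f p - f q) / (sqrt (f p) + sqrt (f q))"
      using pos by (simp add: abs_divide)
    also have "\<dots> \<le> (K1 * dist p q) / (2 * sqrt m)"
      using s sm 1(4)[OF pq] by (intro frac_le) (auto simp del: real_sqrt_le_iff)
    finally show "norm (sqrt (f p) - sqrt (f q)) \<le> K1 / (2 * sqrt m) * dist p q" by simp
  qed (use 1 assms in auto)
qed

lemma BL_compose:
  assumes "BL T f" "K-lipschitz_on S h" "h ` S \<subseteq> T" shows "BL S (\<lambda>p. f (h p))"
proof -
  obtain B1 K1 where 1: "B1 \<ge> 0" "K1 \<ge> 0" "\<And>p. p \<in> T \<Longrightarrow> norm (f p) \<le> B1"
    "\<And>p q. p \<in> T \<Longrightarrow> q \<in> T \<Longrightarrow> norm (f p - f q) \<le> K1 * dist p q" using BLE[OF assms(1)] by blast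
  have K: "K \<ge> 0" using assms(2) lipschitz_on_nonneg by blast
  show ?thesis
  proof (rule BLI[of _ _ B1 "K1 * K"])
    fix p assume "p \<in> S" thus "norm (f (h p)) \<le> B1" using 1(3) assms(3) by auto
  next
    fix p q assume pq: "p \<in> S" "q \<in> S"
    have "norm (f (h p) - f (h q)) \<le> K1 * dist (h p) (h q)" using 1(4) assms(3) pq by auto
    also have "\<dots> \<le> K1 * (K * dist p q)" using lipschitz_onD[OF assms(2) pq] 1(2) by (intro mult_left_mono)
    finally show "norm (f (h p) - f (h q)) \<le> K1 * K * dist p q" by simp
  qed (use 1 K in auto)
qed

lemma BL_of_real:
  assumes "BL S f" shows "BL S (\<lambda>p. complex_of_real (f p))"
proof -
  obtain B1 K1 where 1: "B1 \<ge> 0" "K1 \<ge> 0" "\<And>p. p \<in> S \<Longrightarrow> norm (f p) \<le> B1"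
    "\<And>p q. p \<in> S \<Longrightarrow> q \<in> S \<Longrightarrow> norm (f p - f q) \<le> K1 * dist p q" using BLE[OF assms(1)] by blast
  show ?thesis
    by (rule BLI[of _ _ B1 K1]) (use 1 in \<open>auto simp flip: of_real_diff\<close>)
qed

lemma BL_lip:
  assumes "K-lipschitz_on S f" "a \<in> S" "\<And>p. p \<in> S \<Longrightarrow> dist p a \<le> D" "D \<ge> 0"
  shows "BL S f"
  unfolding BL_def
proof (intro conjI exI ballI)
  show "K-lipschitz_on S f" by fact
  fix p assume p: "p \<in> S"
  have "norm (f p) \<le> norm (f a) + norm (f p - f a)" using norm_triangle_ineq[of "f a" "f p - f a"] by simp
  also have "\<dots> \<le> norm (f a) + K * D"
    using lipschitz_onD[OF assms(1) p assms(2)] assms(3)[OF p] lipschitz_on_nonneg[OF assms(1)]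
    by (simp add: dist_norm) (smt (verit) mult_left_mono)
  finally show "norm (f p) \<le> norm (f a) + K * D" .
qed

lemma BL_mono: "BL S f \<Longrightarrow> T \<subseteq> S \<Longrightarrow> BL T f"
  unfolding BL_def by (blast intro: lipschitz_on_subset)



lemma conv_bound:
  fixes a1 a2 b1 b2 t :: real assumes "0 \<le> t" "t \<le> 1"
  shows "\<bar>a1 + t*(b1-a1) - (a2 + t*(b2-a2))\<bar> \<le> \<bar>b1-b2\<bar> + \<bar>a1-a2\<bar>"
proof -
  have "a1 + t*(b1-a1) - (a2 + t*(b2-a2)) = (1-t)*(a1-a2) + t*(b1-b2)" by (simp add: algebra_simps)
  also have "\<bar>\<dots>\<bar> \<le> \<bar>(1-t)*(a1-a2)\<bar> + \<bar>t*(b1-b2)\<bar>"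
    by (rule abs_triangle_ineq)
  also have "\<dots> = (1-t)*\<bar>a1-a2\<bar> + t*\<bar>b1-b2\<bar>"
    using assms by (simp add: abs_mult)
  also have "(1-t)*\<bar>a1-a2\<bar> \<le> \<bar>a1-a2\<bar>" using assms by (simp add: mult_left_le_one_le)
  also have "t*\<bar>b1-b2\<bar> \<le> \<bar>b1-b2\<bar>" using assms by (simp add: mult_left_le_one_le)
  finally show ?thesis by simp
qed

lemma conv_mem:
  fixes R u x t :: real assumes "R \<le> u" "u \<le> 1" "R \<le> x" "x \<le> 1" "0 \<le> t" "t \<le> 1"
  shows "R \<le> x + t*(u-x) \<and> x + t*(u-x) \<le> 1"
proof -
  have e: "x + t*(u-x) = (1-t)*x + t*u" by (simp add: algebra_simps)
  have "(1-t)*R \<le> (1-t)*x" "t*R \<le> t*u" "(1-t)*x \<le> (1-t)*1" "t*u \<le> t*1"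
    using assms mult_left_mono[of x 1 "1-t"] mult_left_mono[of u 1 t]
      mult_left_mono[of R x "1-t"] mult_left_mono[of R u t] by auto
  thus ?thesis unfolding e by (auto simp: algebra_simps)
qed

lemma powr_neg_half: "(a::real) > 0 \<Longrightarrow> a powr (-1/2) = 1 / sqrt a"
proof -
  assume a: "a > 0"
  have "a powr (-1/2) = a powr (- (1/2))" by simp
  also have "\<dots> = 1 / sqrt a" by (simp add: powr_minus_divide powr_half_sqrt a less_imp_le)
  finally show ?thesis .
qed

lemma fst_lip: "1-lipschitz_on S fst"
  by (rule lipschitz_onI) (auto simp: dist_fst_le)
lemma snd_lip: "1-lipschitz_on S snd"
  by (rule lipschitz_onI) (auto simp: dist_snd_le)

lemma dist_pair_le: "dist (a::real, b::real) (c, d) \<le> \<bar>a - c\<bar> + \<bar>b - d\<bar>"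
  unfolding dist_Pair_Pair dist_real_def using sqrt_sum_squares_le_sum_abs[of "a-c" "b-d"] by simp

locale L52 =
  fixes R :: real and c c' :: "real \<Rightarrow> real" and lam :: "real \<Rightarrow> complex" and Lc Ll :: real
  assumes R: "0 < R" "R < 1"
    and c_pos: "\<forall>r\<in>{R..1}. c r > 0"
    and c_deriv: "\<forall>r\<in>{R..1}. (c has_real_derivative c' r) (at r within {R..1})"
    and c'_lip: "Lc-lipschitz_on {R..1} c'"
    and herglotz: "\<forall>r\<in>{R..1}. \<exists>D>0. ((\<lambda>t. t / c t) has_real_derivative D) (at r within {R..1})"
    and lam_lip: "Ll-lipschitz_on {R..1} lam"
begin

lemma I_dist: "p \<in> {R..1} \<Longrightarrow> dist p R \<le> 1"
  using R by (auto simp: dist_real_def)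

lemma BL_c': "BL {R..1} c'"
  by (rule BL_lip[OF c'_lip, of R 1]) (use R I_dist in auto)

lemma BL_lam: "BL {R..1} lam"
  by (rule BL_lip[OF lam_lip, of R 1]) (use R I_dist in auto)

lemma BL_id: "BL {R..1} (\<lambda>t. t)"
  by (rule BL_lip[OF lipschitz_on_id, of R _ 1]) (use R I_dist in auto)

lemma c_lip: "\<exists>K. K-lipschitz_on {R..1} c"
proof -
  obtain B K where B: "B \<ge> 0" "K \<ge> 0" "\<And>p. p \<in> {R..1} \<Longrightarrow> norm (c' p) \<le> B"
    "\<And>p q. p \<in> {R..1} \<Longrightarrow> q \<in> {R..1} \<Longrightarrow> norm (c' p - c' q) \<le> K * dist p q"
    using BLE[OF BL_c'] by blast
  have "norm (c x - c y) \<le> B * norm (x - y)" if "x \<in> {R..1}" "y \<in> {R..1}" for x y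
  proof (rule field_differentiable_bound[of "{R..1}" c c' B])
    show "convex {R..1}" by simp
    show "(c has_field_derivative c' z) (at z within {R..1})" if "z \<in> {R..1}" for z
      using c_deriv that by blast
    show "norm (c' z) \<le> B" if "z \<in> {R..1}" for z using B(3) that by blast
  qed (use that in auto)
  hence "B-lipschitz_on {R..1} c" using B(1) by (intro lipschitz_onI) (auto simp: dist_norm)
  thus ?thesis by blast
qed

lemma BL_c: "BL {R..1} c"
proof -
  obtain K where K: "K-lipschitz_on {R..1} c" using c_lip by blast
  show ?thesis by (rule BL_lip[OF K, of R 1]) (use R I_dist in auto)
qed

lemma c_cont: "continuous_on {R..1} c"
  using c_lip lipschitz_on_continuous_on by blast

lemma c'_cont: "continuous_on {R..1} c'"
  using c'_lip lipschitz_on_continuous_on by blast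

lemma cmin: obtains cm where "cm > 0" "\<And>t. t \<in> {R..1} \<Longrightarrow> c t \<ge> cm"
proof -
  obtain t0 where "t0 \<in> {R..1}" "\<forall>y\<in>{R..1}. c t0 \<le> c y"
    using continuous_attains_inf[OF compact_Icc _ c_cont] R by auto
  thus ?thesis using that c_pos by blast
qed

definition g' where "g' t = (c t - t * c' t) / (c t * c t)"
definition g where "g t = t / c t"

lemma g_deriv: "t \<in> {R..1} \<Longrightarrow> (g has_real_derivative g' t) (at t within {R..1})"
proof -
  assume t: "t \<in> {R..1}"
  have "c t \<noteq> 0" using c_pos t by force
  thus ?thesis unfolding g_def[abs_def] g'_def
    using c_deriv t by (auto intro!: derivative_eq_intros)
qed

lemma g'_pos: "t \<in> {R..1} \<Longrightarrow> g' t > 0"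
proof -
  assume t: "t \<in> {R..1}"
  obtain D where D: "D > 0" "((\<lambda>t. t / c t) has_real_derivative D) (at t within {R..1})"
    using herglotz t by blast
  have v1: "((\<lambda>t. t / c t) has_vector_derivative D) (at t within cbox R 1)"
    using D(2) by (simp add: has_real_derivative_iff_has_vector_derivative)
  have v2: "((\<lambda>t. t / c t) has_vector_derivative g' t) (at t within cbox R 1)"
    using g_deriv[OF t] unfolding g_def[abs_def] by (simp add: has_real_derivative_iff_has_vector_derivative)
  have tc: "t \<in> cbox R 1" using t by simp
  have "D = g' t"
    by (rule vector_derivative_unique_within_closed_interval[OF R(2) tc v1 v2])
  thus ?thesis using D by simp
qed

lemma BL_g': "BL {R..1} g'"
proof -
  obtain cm where cm: "cm > 0" "\<And>t. t \<in> {R..1} \<Longrightarrow> c t \<ge> cm" using cmin by blast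
  have "BL {R..1} (\<lambda>t. (c t - t * c' t) * (1 / (c t * c t)))"
  proof (intro BL_mult BL_diff BL_c BL_id BL_c' BL_inverse)
    show "cm * cm > 0" using cm by simp
    show "cm * cm \<le> c t * c t" if "t \<in> {R..1}" for t
      using cm(2)[OF that] cm(1) by (intro mult_mono) auto
  qed
  moreover have "g' = (\<lambda>t. (c t - t * c' t) * (1 / (c t * c t)))" by (simp add: fun_eq_iff g'_def)
  ultimately show ?thesis by simp
qed

lemma BL_g: "BL {R..1} g"
proof -
  obtain cm where cm: "cm > 0" "\<And>t. t \<in> {R..1} \<Longrightarrow> c t \<ge> cm" using cmin by blast
  have "BL {R..1} (\<lambda>t. t * (1 / c t))"
    by (intro BL_mult BL_id BL_inverse[of _ _ cm] BL_c) (use cm in auto)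
  moreover have "g = (\<lambda>t. t * (1 / c t))" by (simp add: fun_eq_iff g_def)
  ultimately show ?thesis by simp
qed

lemma BL_cont: "BL S f \<Longrightarrow> continuous_on S f"
  unfolding BL_def using lipschitz_on_continuous_on by blast

lemma g'min: obtains gm where "gm > 0" "\<And>t. t \<in> {R..1} \<Longrightarrow> g' t \<ge> gm"
proof -
  obtain t0 where "t0 \<in> {R..1}" "\<forall>y\<in>{R..1}. g' t0 \<le> g' y"
    using continuous_attains_inf[OF compact_Icc _ BL_cont[OF BL_g']] R by auto
  thus ?thesis using that g'_pos by blast
qed

lemma gmin: obtains gm where "gm > 0" "\<And>t. t \<in> {R..1} \<Longrightarrow> g t \<ge> gm"
proof -
  obtain t0 where "t0 \<in> {R..1}" "\<forall>y\<in>{R..1}. g t0 \<le> g y"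
    using continuous_attains_inf[OF compact_Icc _ BL_cont[OF BL_g]] R by auto
  moreover have "g t0 > 0" using \<open>t0 \<in> {R..1}\<close> c_pos R by (auto simp: g_def)
  ultimately show ?thesis using that by blast
qed

end


context L52 begin

definition DQ :: "real \<times> real \<Rightarrow> real" where
  "DQ p = integral {0..1} (\<lambda>\<tau>. g' (snd p + \<tau> * (fst p - snd p)))"

lemma path_in: assumes "p \<in> {R..1} \<times> {R..1}" "\<tau> \<in> {0..1}"
  shows "snd p + \<tau> * (fst p - snd p) \<in> {R..1}"
proof (cases p)
  case (Pair u x) thus ?thesis using conv_mem[of R u x \<tau>] assms by auto
qed

lemma path_cont: assumes p: "p \<in> {R..1} \<times> {R..1}"
  shows "continuous_on {0..1} (\<lambda>\<tau>. g' (snd p + \<tau> * (fst p - snd p)))"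
proof (rule continuous_on_compose2[OF BL_cont[OF BL_g']])
  show "continuous_on {0..1} (\<lambda>\<tau>. snd p + \<tau> * (fst p - snd p))" by (intro continuous_intros)
  show "(\<lambda>\<tau>. snd p + \<tau> * (fst p - snd p)) ` {0..1} \<subseteq> {R..1}" using path_in[OF p] by blast
qed

lemma DQ_int: "p \<in> {R..1} \<times> {R..1} \<Longrightarrow> ((\<lambda>\<tau>. g' (snd p + \<tau> * (fst p - snd p))) has_integral DQ p) {0..1}"
  unfolding DQ_def using integrable_continuous_interval[OF path_cont] by (simp add: has_integral_integral)

lemma DQ_eq: assumes p: "p \<in> {R..1} \<times> {R..1}" shows "g (fst p) - g (snd p) = (fst p - snd p) * DQ p"
proof -
  define h where "h \<tau> = snd p + \<tau> * (fst p - snd p)" for \<tau>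
  have hin: "h ` {0..1} \<subseteq> {R..1}" using path_in[OF p] by (auto simp: h_def)
  have "((\<lambda>\<tau>. g (h \<tau>)) has_vector_derivative (g' (h \<tau>) * (fst p - snd p))) (at \<tau> within {0..1})"
    if t: "\<tau> \<in> {0..1}" for \<tau>
  proof -
    have ht: "h \<tau> \<in> {R..1}" using hin t by blast
    have d1: "(g has_real_derivative g' (h \<tau>)) (at (h \<tau>) within h ` {0..1})"
      by (rule DERIV_subset[OF g_deriv[OF ht] hin])
    have d2: "(h has_real_derivative (fst p - snd p)) (at \<tau> within {0..1})"
      unfolding h_def[abs_def] by (auto intro!: derivative_eq_intros)
    show ?thesis using DERIV_image_chain[OF d1 d2]
      by (simp add: has_real_derivative_iff_has_vector_derivative o_def)
  qed
  from fundamental_theorem_of_calculus[OF _ this]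
  have 1: "((\<lambda>\<tau>. g' (h \<tau>) * (fst p - snd p)) has_integral (g (h 1) - g (h 0))) {0..1}" by simp
  have 2: "((\<lambda>\<tau>. g' (h \<tau>) * (fst p - snd p)) has_integral (DQ p * (fst p - snd p))) {0..1}"
    using has_integral_mult_left[OF DQ_int[OF p]] by (simp add: h_def)
  have "g (h 1) - g (h 0) = DQ p * (fst p - snd p)" using has_integral_unique[OF 1 2] .
  thus ?thesis by (simp add: h_def mult.commute)
qed

lemma DQ_min: obtains m where "m > 0" "\<And>p. p \<in> {R..1} \<times> {R..1} \<Longrightarrow> DQ p \<ge> m"
proof -
  obtain gm where gm: "gm > 0" "\<And>t. t \<in> {R..1} \<Longrightarrow> g' t \<ge> gm" using g'min by blast
  have "DQ p \<ge> gm" if p: "p \<in> {R..1} \<times> {R..1}" for p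
    using has_integral_le[OF has_integral_const_real[of gm 0 1] DQ_int[OF p]] gm(2) path_in[OF p]
    by auto
  thus ?thesis using that gm(1) by blast
qed

lemma BL_DQ: "BL ({R..1} \<times> {R..1}) DQ"
proof -
  obtain B K where BK: "B \<ge> 0" "K \<ge> 0" "\<And>t. t \<in> {R..1} \<Longrightarrow> norm (g' t) \<le> B"
    "\<And>s t. s \<in> {R..1} \<Longrightarrow> t \<in> {R..1} \<Longrightarrow> norm (g' s - g' t) \<le> K * dist s t"
    using BLE[OF BL_g'] by blast
  show ?thesis
  proof (rule BLI[of _ _ B "K * 2"])
    fix p assume p: "p \<in> {R..1} \<times> {R..1}"
    have "norm (DQ p) \<le> B * Henstock_Kurzweil_Integration.content (cbox 0 (1::real))"
      by (rule has_integral_bound[OF BK(1)]) (use DQ_int[OF p] BK(3) path_in[OF p] in auto)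
    thus "norm (DQ p) \<le> B" by simp
  next
    fix p q assume p: "p \<in> {R..1} \<times> {R..1}" and q: "q \<in> {R..1} \<times> {R..1}"
    have "norm (DQ p - DQ q) \<le> (K * 2 * dist p q) * Henstock_Kurzweil_Integration.content (cbox 0 (1::real))"
    proof (rule has_integral_bound)
      show "((\<lambda>\<tau>. g' (snd p + \<tau> * (fst p - snd p)) - g' (snd q + \<tau> * (fst q - snd q)))
        has_integral (DQ p - DQ q)) (cbox 0 1)"
        using has_integral_diff[OF DQ_int[OF p] DQ_int[OF q]] by simp
      fix \<tau> :: real assume t: "\<tau> \<in> cbox 0 1"
      have "norm (g' (snd p + \<tau> * (fst p - snd p)) - g' (snd q + \<tau> * (fst q - snd q)))
          \<le> K * dist (snd p + \<tau> * (fst p - snd p)) (snd q + \<tau> * (fst q - snd q))"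
        using BK(4) path_in p q t by auto
      also have "dist (snd p + \<tau> * (fst p - snd p)) (snd q + \<tau> * (fst q - snd q))
          \<le> \<bar>fst p - fst q\<bar> + \<bar>snd p - snd q\<bar>"
        unfolding dist_real_def using conv_bound[of \<tau> "snd p" "fst p" "snd q" "fst q"] t by auto
      also have "\<dots> \<le> 2 * dist p q"
        using dist_fst_le[of p q] dist_snd_le[of p q] by (simp add: dist_real_def)
      finally show "norm (g' (snd p + \<tau> * (fst p - snd p)) - g' (snd q + \<tau> * (fst q - snd q)))
          \<le> K * 2 * dist p q" using BK(2) by (simp add: mult_left_mono mult.assoc)
    qed (use BK(2) in auto)
    thus "norm (DQ p - DQ q) \<le> K * 2 * dist p q" by simp
  qed (use BK in auto)
qed

definition q :: "real \<times> real \<Rightarrow> real" where "q p = (g (fst p) + g (snd p)) * DQ p"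

lemma fst_S2: "fst ` ({R..1} \<times> {R..1}) \<subseteq> {R..1}" and snd_S2: "snd ` ({R..1} \<times> {R..1}) \<subseteq> {R..1}"
  by auto

lemma BL_q: "BL ({R..1} \<times> {R..1}) q"
proof -
  have "BL ({R..1} \<times> {R..1}) (\<lambda>p. (g (fst p) + g (snd p)) * DQ p)"
    by (intro BL_mult BL_add BL_DQ BL_compose[OF BL_g fst_lip fst_S2] BL_compose[OF BL_g snd_lip snd_S2])
  thus ?thesis unfolding q_def[abs_def] .
qed

lemma q_min: obtains m where "m > 0" "\<And>p. p \<in> {R..1} \<times> {R..1} \<Longrightarrow> q p \<ge> m"
proof -
  obtain m1 where m1: "m1 > 0" "\<And>p. p \<in> {R..1} \<times> {R..1} \<Longrightarrow> DQ p \<ge> m1" using DQ_min by blast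
  obtain m2 where m2: "m2 > 0" "\<And>t. t \<in> {R..1} \<Longrightarrow> g t \<ge> m2" using gmin by blast
  have "q p \<ge> (m2 + m2) * m1" if p: "p \<in> {R..1} \<times> {R..1}" for p
  proof -
    have "m2 \<le> g (fst p)" "m2 \<le> g (snd p)" "m1 \<le> DQ p" using m1 m2 p by auto
    thus ?thesis unfolding q_def using m1(1) m2(1) by (intro mult_mono add_mono) auto
  qed
  thus ?thesis using that m1 m2 by (metis add_pos_pos mult_pos_pos)
qed

definition psi :: "real \<times> real \<Rightarrow> complex" where
  "psi p = lam (fst p) * complex_of_real (fst p * (1 / (c (fst p) * c (fst p) * sqrt (q p))))"

lemma BL_psi: "BL ({R..1} \<times> {R..1}) psi"
proof -
  obtain cm where cm: "cm > 0" "\<And>t. t \<in> {R..1} \<Longrightarrow> c t \<ge> cm" using cmin by blast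
  obtain m where m: "m > 0" "\<And>p. p \<in> {R..1} \<times> {R..1} \<Longrightarrow> q p \<ge> m" using q_min by blast
  have low: "cm * cm * sqrt m \<le> c (fst p) * c (fst p) * sqrt (q p)" if p: "p \<in> {R..1} \<times> {R..1}" for p
  proof -
    have "fst p \<in> {R..1}" using p by auto
    hence "cm \<le> c (fst p)" using cm by blast
    moreover have "sqrt m \<le> sqrt (q p)" using m p by simp
    ultimately show ?thesis using cm(1) m(1) by (intro mult_mono) auto
  qed
  have "BL ({R..1} \<times> {R..1}) (\<lambda>p. c (fst p) * c (fst p) * sqrt (q p))"
    by (intro BL_mult BL_compose[OF BL_c fst_lip fst_S2] BL_sqrt[OF BL_q m(1)] m(2))
  hence inv: "BL ({R..1} \<times> {R..1}) (\<lambda>p. 1 / (c (fst p) * c (fst p) * sqrt (q p)))"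
    by (rule BL_inverse[of _ _ "cm * cm * sqrt m"]) (use low cm m in auto)
  hence "BL ({R..1} \<times> {R..1}) psi"
    unfolding psi_def[abs_def]
    by (intro BL_mult BL_of_real BL_compose[OF BL_lam fst_lip fst_S2] BL_compose[OF BL_id fst_lip fst_S2] inv)
  thus ?thesis .
qed

end


lemma powr_int: "((\<lambda>s::real. s powr (-1/2)) has_integral 2) {0..1}"
  using has_integral_powr_from_0[of "-1/2" 1] by simp

lemma sing_int:
  fixes \<phi> :: "real \<Rightarrow> complex" assumes "continuous_on {0..1} \<phi>"
  shows "(\<lambda>s. complex_of_real (s powr (-1/2)) * \<phi> s) integrable_on {0..1}"
proof -
  have bil: "bilinear (\<lambda>(a::complex) (b::real). b *\<^sub>R a)"
    unfolding bilinear_conv_bounded_bilinear by (rule bounded_bilinear.flip[OF bounded_bilinear_scaleR])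
  have meas: "\<phi> \<in> borel_measurable (lebesgue_on {0..1})"
    by (rule continuous_imp_measurable_on_sets_lebesgue[OF assms]) simp
  have bou: "bounded (\<phi> ` {0..1})"
    by (rule compact_imp_bounded[OF compact_continuous_image[OF assms compact_Icc]])
  have ai: "(\<lambda>s::real. s powr (-1/2)) absolutely_integrable_on {0..1}"
    by (rule nonnegative_absolutely_integrable_1[OF integrable_on_powr_from_0]) auto
  have "(\<lambda>s. (s powr (-1/2)) *\<^sub>R \<phi> s) absolutely_integrable_on {0..1}"
    using absolutely_integrable_bounded_measurable_product[OF bil meas _ bou ai] by simp
  hence "(\<lambda>s. (s powr (-1/2)) *\<^sub>R \<phi> s) integrable_on {0..1}"
    unfolding absolutely_integrable_on_def by blast
  thus ?thesis by (simp add: scaleR_conv_of_real)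
qed

lemma sing_bound:
  fixes \<phi> :: "real \<Rightarrow> complex"
  assumes "continuous_on {0..1} \<phi>" "\<And>s. s \<in> {0..1} \<Longrightarrow> norm (\<phi> s) \<le> B"
  shows "norm (integral {0..1} (\<lambda>s. complex_of_real (s powr (-1/2)) * \<phi> s)) \<le> 2 * B"
proof -
  have gi: "((\<lambda>s::real. B * s powr (-1/2)) has_integral B * 2) {0..1}"
    using has_integral_mult_right[OF powr_int] by simp
  have "norm (integral {0..1} (\<lambda>s. complex_of_real (s powr (-1/2)) * \<phi> s)) \<le> integral {0..1} (\<lambda>s. B * s powr (-1/2))"
  proof (rule integral_norm_bound_integral[OF sing_int[OF assms(1)]])
    show "(\<lambda>s. B * s powr (-1/2)) integrable_on {0..1}" using gi by blast
    fix s :: real assume s: "s \<in> {0..1}"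
    have "norm (complex_of_real (s powr (-1/2)) * \<phi> s) = s powr (-1/2) * norm (\<phi> s)"
      by (simp add: norm_mult)
    also have "\<dots> \<le> s powr (-1/2) * B" using assms(2)[OF s] by (intro mult_left_mono) auto
    finally show "norm (complex_of_real (s powr (-1/2)) * \<phi> s) \<le> B * s powr (-1/2)" by (simp add: mult.commute)
  qed
  also have "\<dots> = B * 2" using gi by (rule integral_unique)
  finally show ?thesis by simp
qed

lemma powr_neg_half': "(a::real) > 0 \<Longrightarrow> a powr (- (1/2)) = 1 / sqrt a"
  using powr_neg_half by simp

context L52 begin

lemma H_eq:
  assumes xu: "R \<le> x" "x \<le> u" "u \<le> 1"
  shows "lam u * complex_of_real (H c u x) = psi (u, x) * complex_of_real ((u - x) powr (-1/2))"
proof (cases "x = u")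
  case True
  have "c u > 0" "u > 0" using c_pos xu R by auto
  thus ?thesis using True by (simp add: H_def)
next
  case False
  hence xu': "x < u" using xu by simp
  have p: "(u, x) \<in> {R..1} \<times> {R..1}" using xu by auto
  have cu: "c u > 0" and cx: "c x > 0" and u0: "u > 0" and x0: "x > 0" using c_pos xu R by auto
  have gu: "g u > 0" and gx: "g x > 0" using cu cx u0 x0 by (auto simp: g_def)
  obtain m where m: "m > 0" "\<And>p. p \<in> {R..1} \<times> {R..1} \<Longrightarrow> q p \<ge> m" using q_min by blast
  have qp: "q (u, x) > 0" using m p by force
  have e1: "x * c u / (u * c x) = g x / g u" using cu cx u0 x0 by (simp add: g_def field_simps)
  have DQe: "g u - g x = (u - x) * DQ (u, x)" using DQ_eq[OF p] by simp
  have "1 - (g x / g u)^2 = (g u - g x) * (g u + g x) / (g u)^2"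
    using gu by (simp add: field_simps power2_eq_square)
  also have "\<dots> = ((u - x) * q (u, x)) / (g u)^2" unfolding DQe q_def by (simp add: algebra_simps)
  finally have e2: "1 - (x * c u / (u * c x))^2 = ((u - x) * q (u, x)) / (g u)^2" using e1 by simp
  have A: "(u - x) * q (u, x) > 0" using xu' qp by simp
  have "H c u x = 1 / c u * (((u - x) * q (u, x)) / (g u)^2) powr (-1/2)"
    unfolding H_def e2 ..
  also have "\<dots> = 1 / c u * (1 / sqrt (((u - x) * q (u, x)) / (g u)^2))"
  proof -
    have pos: "0 < ((u - x) * q (u, x)) / (g u)^2" using A gu by simp
    show ?thesis by (simp only: powr_neg_half[OF pos])
  qed
  also have "sqrt (((u - x) * q (u, x)) / (g u)^2) = sqrt (u - x) * sqrt (q (u, x)) / g u"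
    using gu by (simp add: real_sqrt_divide real_sqrt_mult)
  also have "1 / c u * (1 / (sqrt (u - x) * sqrt (q (u, x)) / g u))
      = u * (1 / (c u * c u * sqrt (q (u, x)))) * (1 / sqrt (u - x))"
    using cu u0 xu' qp by (simp add: g_def field_simps)
  also have "1 / sqrt (u - x) = (u - x) powr (-1/2)" using xu' by (simp add: powr_neg_half')
  finally have "H c u x = u * (1 / (c u * c u * sqrt (q (u, x)))) * (u - x) powr (-1/2)" .
  thus ?thesis by (simp add: psi_def)
qed

definition J :: "real \<Rightarrow> real \<Rightarrow> complex" where
  "J r x = integral {0..1} (\<lambda>s. complex_of_real (s powr (-1/2)) * psi (x + s * (r - x), x))"

lemma seg_in: assumes "R \<le> x" "x \<le> r" "r \<le> 1" "s \<in> {0..1}"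
  shows "(x + s * (r - x), x) \<in> {R..1} \<times> {R..1}"
  using conv_mem[of R r x s] assms by auto

lemma psi_path_cont: assumes "R \<le> x" "x \<le> r" "r \<le> 1"
  shows "continuous_on {0..1} (\<lambda>s. psi (x + s * (r - x), x))"
proof (rule continuous_on_compose2[OF BL_cont[OF BL_psi]])
  show "continuous_on {0..1} (\<lambda>s. (x + s * (r - x), x))" by (intro continuous_intros)
  show "(\<lambda>s. (x + s * (r - x), x)) ` {0..1} \<subseteq> {R..1} \<times> {R..1}" using seg_in[OF assms] by blast
qed

lemma J_has_integral: assumes "R \<le> x" "x \<le> r" "r \<le> 1"
  shows "((\<lambda>s. complex_of_real (s powr (-1/2)) * psi (x + s * (r - x), x)) has_integral J r x) {0..1}"
  unfolding J_def using sing_int[OF psi_path_cont[OF assms]] by (simp add: has_integral_integral)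

lemma J_integral:
  assumes xr: "R \<le> x" "x < r" "r \<le> 1"
  shows "((\<lambda>u. lam u * complex_of_real (H c u x)) has_integral (complex_of_real (sqrt (r - x)) * J r x)) {x..r}"
proof -
  define d where "d = r - x"
  have d: "d > 0" using xr by (simp add: d_def)
  define f where "f u = psi (u, x) * complex_of_real ((u - x) powr (-1/2))" for u
  have 1: "((\<lambda>s. complex_of_real (d powr (-1/2)) * (complex_of_real (s powr (-1/2)) * psi (x + s * (r - x), x)))
      has_integral (complex_of_real (d powr (-1/2)) * J r x)) {0..1}"
    by (rule has_integral_mult_right[OF J_has_integral]) (use xr in auto)
  have 2: "((\<lambda>s. f (d *\<^sub>R s + x)) has_integral (complex_of_real (d powr (-1/2)) * J r x)) {0..1}"
  proof (rule has_integral_eq[OF _ 1])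
    fix s :: real assume s: "s \<in> {0..1}"
    have pw: "(d * s) powr (-1/2) = d powr (-1/2) * s powr (-1/2)" using d s by (simp add: powr_mult)
    have e: "x + s * (r - x) = d * s + x" by (simp add: d_def algebra_simps)
    have "f (d *\<^sub>R s + x) = psi (d * s + x, x) * complex_of_real (d powr (-1/2) * s powr (-1/2))"
      unfolding f_def using pw by simp
    thus "complex_of_real (d powr (-1/2)) * (complex_of_real (s powr (-1/2)) * psi (x + s * (r - x), x))
        = f (d *\<^sub>R s + x)"
      unfolding e by (simp add: mult_ac)
  qed
  have v: "complex_of_real (d powr (-1/2)) * J r x = (complex_of_real (sqrt d) * J r x) /\<^sub>R d ^ DIM(real)"
  proof -
    have s2: "sqrt d * sqrt d = d" using d by simp
    have "d powr (-1/2) = 1 / sqrt d" using d by (simp add: powr_neg_half')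
    also have "\<dots> = sqrt d / d" using d by (subst (2) s2[symmetric]) (simp add: field_simps)
    finally have "d powr (-1/2) = sqrt d / d" .
    thus ?thesis by (simp add: scaleR_conv_of_real field_simps)
  qed
  have box: "cbox ((x - x) /\<^sub>R d) ((r - x) /\<^sub>R d) = {0..1}" using d by (simp add: d_def)
  have "(f has_integral (complex_of_real (sqrt d) * J r x)) (cbox x r)"
    using has_integral_affinity_iff[OF d, of f x "complex_of_real (sqrt d) * J r x" x r] 2 v box by simp
  hence "(f has_integral (complex_of_real (sqrt d) * J r x)) {x..r}" by simp
  thus ?thesis unfolding d_def
    by (rule has_integral_eq[rotated]) (use xr H_eq in \<open>auto simp: f_def d_def\<close>)
qed

end


context L52 begin

lemma psi_BK: obtains Bp Kp where "Bp \<ge> 0" "Kp \<ge> 0"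
  "\<And>p. p \<in> {R..1} \<times> {R..1} \<Longrightarrow> norm (psi p) \<le> Bp"
  "\<And>p q. p \<in> {R..1} \<times> {R..1} \<Longrightarrow> q \<in> {R..1} \<times> {R..1} \<Longrightarrow> norm (psi p - psi q) \<le> Kp * dist p q"
  using BLE[OF BL_psi] by blast

lemma J_bound:
  assumes p: "R \<le> x" "x \<le> r" "r \<le> 1" and B: "\<And>p. p \<in> {R..1} \<times> {R..1} \<Longrightarrow> norm (psi p) \<le> Bp"
  shows "norm (J r x) \<le> 2 * Bp"
  unfolding J_def
proof (rule sing_bound[OF psi_path_cont[OF p]])
  fix s :: real assume "s \<in> {0..1}"
  thus "norm (psi (x + s * (r - x), x)) \<le> Bp" using seg_in[OF p] B by blast
qed

lemma J_lip:
  assumes p1: "R \<le> x1" "x1 \<le> r1" "r1 \<le> 1" and p2: "R \<le> x2" "x2 \<le> r2" "r2 \<le> 1"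
    and K: "\<And>p q. p \<in> {R..1} \<times> {R..1} \<Longrightarrow> q \<in> {R..1} \<times> {R..1} \<Longrightarrow> norm (psi p - psi q) \<le> Kp * dist p q"
    and K0: "Kp \<ge> 0"
  shows "norm (J r1 x1 - J r2 x2) \<le> 2 * (Kp * 3 * dist (r1, x1) (r2, x2))"
proof -
  define F1 where "F1 s = psi (x1 + s * (r1 - x1), x1)" for s
  define F2 where "F2 s = psi (x2 + s * (r2 - x2), x2)" for s
  have c1: "continuous_on {0..1} F1" unfolding F1_def[abs_def] by (rule psi_path_cont[OF p1])
  have c2: "continuous_on {0..1} F2" unfolding F2_def[abs_def] by (rule psi_path_cont[OF p2])
  have "J r1 x1 - J r2 x2 = integral {0..1} (\<lambda>s. complex_of_real (s powr (-1/2)) * F1 s - complex_of_real (s powr (-1/2)) * F2 s)"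
    unfolding J_def F1_def F2_def by (rule integral_diff[symmetric, OF sing_int sing_int]) (use c1 c2 in \<open>auto simp: F1_def[abs_def] F2_def[abs_def]\<close>)
  also have "\<dots> = integral {0..1} (\<lambda>s. complex_of_real (s powr (-1/2)) * (F1 s - F2 s))"
    by (simp add: right_diff_distrib)
  finally have eq: "J r1 x1 - J r2 x2 = integral {0..1} (\<lambda>s. complex_of_real (s powr (-1/2)) * (F1 s - F2 s))" .
  have dr: "\<bar>r1 - r2\<bar> \<le> dist (r1, x1) (r2, x2)" using dist_fst_le[of "(r1, x1)" "(r2, x2)"] by (simp add: dist_real_def)
  have dx: "\<bar>x1 - x2\<bar> \<le> dist (r1, x1) (r2, x2)" using dist_snd_le[of "(r1, x1)" "(r2, x2)"] by (simp add: dist_real_def)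
  have "norm (integral {0..1} (\<lambda>s. complex_of_real (s powr (-1/2)) * (F1 s - F2 s))) \<le> 2 * (Kp * 3 * dist (r1, x1) (r2, x2))"
  proof (rule sing_bound)
    show "continuous_on {0..1} (\<lambda>s. F1 s - F2 s)" using c1 c2 by (intro continuous_intros)
    fix s :: real assume s: "s \<in> {0..1}"
    have n1: "norm (F1 s - F2 s) \<le> Kp * dist (x1 + s * (r1 - x1), x1) (x2 + s * (r2 - x2), x2)"
      unfolding F1_def F2_def by (rule K) (use seg_in p1 p2 s in auto)
    have n2: "dist (x1 + s * (r1 - x1), x1) (x2 + s * (r2 - x2), x2) \<le> \<bar>x1 + s * (r1 - x1) - (x2 + s * (r2 - x2))\<bar> + \<bar>x1 - x2\<bar>"
      by (rule dist_pair_le)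
    have n3: "\<bar>x1 + s * (r1 - x1) - (x2 + s * (r2 - x2))\<bar> \<le> \<bar>r1 - r2\<bar> + \<bar>x1 - x2\<bar>"
      using conv_bound[of s x1 r1 x2 r2] s by simp
    have n4: "dist (x1 + s * (r1 - x1), x1) (x2 + s * (r2 - x2), x2) \<le> 3 * dist (r1, x1) (r2, x2)"
      using n2 n3 dr dx by linarith
    have "norm (F1 s - F2 s) \<le> Kp * (3 * dist (r1, x1) (r2, x2))"
      using n1 mult_left_mono[OF n4 K0] by linarith
    thus "norm (F1 s - F2 s) \<le> Kp * 3 * dist (r1, x1) (r2, x2)" by (simp add: mult.assoc)
  qed
  thus ?thesis using eq by simp
qed

lemma Lam_eq: assumes "R \<le> x" "x < r" "r \<le> 1"
  shows "Lam c lam r x = cosh (complex_of_real (sqrt (r - x)) * J r x)"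
  unfolding Lam_def using integral_unique[OF J_integral[OF assms]] by simp

lemma sq_eq: "(d::real) \<ge> 0 \<Longrightarrow> (complex_of_real (sqrt d) * z)^2 = complex_of_real d * z^2"
  by (simp add: power_mult_distrib flip: of_real_power)

lemma a_bound:
  assumes "R \<le> x" "x < r" "r \<le> 1" "norm (J r x) \<le> M"
  shows "norm (complex_of_real (sqrt (r - x)) * J r x) \<le> M"
proof -
  have "sqrt (r - x) \<le> 1" using assms R by simp
  moreover have "sqrt (r - x) \<ge> 0" using assms by simp
  ultimately have "sqrt (r - x) * norm (J r x) \<le> 1 * M"
    using assms(4) by (intro mult_mono) (auto intro: order_trans[OF norm_ge_zero])
  moreover have "\<bar>sqrt (r - x)\<bar> = sqrt (r - x)" using assms(2) by simp
  ultimately show ?thesis by (simp add: norm_mult)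
qed

lemma Lam_lip: "\<exists>L. L-lipschitz_on {(r, x). R \<le> x \<and> x < r \<and> r \<le> 1} (\<lambda>(r, x). Lam c lam r x)"
proof -
  obtain Bp Kp where BK: "Bp \<ge> 0" "Kp \<ge> 0"
    "\<And>p. p \<in> {R..1} \<times> {R..1} \<Longrightarrow> norm (psi p) \<le> Bp"
    "\<And>p q. p \<in> {R..1} \<times> {R..1} \<Longrightarrow> q \<in> {R..1} \<times> {R..1} \<Longrightarrow> norm (psi p - psi q) \<le> Kp * dist p q"
    using psi_BK by blast
  define M where "M = 2 * Bp"
  define KJ where "KJ = 2 * (Kp * 3)"
  define C where "C = exp M ^ 2 / 2"
  have M0: "M \<ge> 0" and KJ0: "KJ \<ge> 0" and C0: "C \<ge> 0" using BK by (auto simp: M_def KJ_def C_def)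
  have "(C * (2 * M^2 + 2 * M * KJ))-lipschitz_on {(r, x). R \<le> x \<and> x < r \<and> r \<le> 1} (\<lambda>(r, x). Lam c lam r x)"
  proof (rule lipschitz_onI)
    show "0 \<le> C * (2 * M^2 + 2 * M * KJ)" using M0 KJ0 C0 by simp
    fix p q assume pT: "p \<in> {(r, x). R \<le> x \<and> x < r \<and> r \<le> 1}" and qT: "q \<in> {(r, x). R \<le> x \<and> x < r \<and> r \<le> 1}"
    obtain r1 x1 where p: "p = (r1, x1)" by (cases p)
    obtain r2 x2 where q: "q = (r2, x2)" by (cases q)
    have p1: "R \<le> x1" "x1 < r1" "r1 \<le> 1" using pT p by auto
    have p2: "R \<le> x2" "x2 < r2" "r2 \<le> 1" using qT q by auto
    define D where "D = dist (r1, x1) (r2, x2)"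
    have D0: "D \<ge> 0" by (simp add: D_def)
    define J1 where "J1 = J r1 x1"
    define J2 where "J2 = J r2 x2"
    define d1 where "d1 = r1 - x1"
    define d2 where "d2 = r2 - x2"
    have J1b: "norm J1 \<le> M" unfolding J1_def M_def by (rule J_bound) (use p1 BK(3) in auto)
    have J2b: "norm J2 \<le> M" unfolding J2_def M_def by (rule J_bound) (use p2 BK(3) in auto)
    have JL: "norm (J1 - J2) \<le> KJ * D" unfolding J1_def J2_def KJ_def D_def
      using J_lip[of x1 r1 x2 r2 Kp] p1 p2 BK(2,4) by (simp add: mult.assoc)
    have dr: "\<bar>r1 - r2\<bar> \<le> D" using dist_fst_le[of "(r1, x1)" "(r2, x2)"] by (simp add: dist_real_def D_def)
    have dx: "\<bar>x1 - x2\<bar> \<le> D" using dist_snd_le[of "(r1, x1)" "(r2, x2)"] by (simp add: dist_real_def D_def)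
    have dd: "\<bar>d1 - d2\<bar> \<le> 2 * D" using dr dx by (simp add: d1_def d2_def)
    have d2b: "0 \<le> d2" "d2 \<le> 1" using p2 R by (auto simp: d2_def)
    have a1: "norm (complex_of_real (sqrt d1) * J1) \<le> M" unfolding d1_def J1_def
      by (rule a_bound) (use p1 J1b J1_def in auto)
    have a2: "norm (complex_of_real (sqrt d2) * J2) \<le> M" unfolding d2_def J2_def
      by (rule a_bound) (use p2 J2b J2_def in auto)
    have "dist (Lam c lam r1 x1) (Lam c lam r2 x2)
        = norm (cosh (complex_of_real (sqrt d1) * J1) - cosh (complex_of_real (sqrt d2) * J2))"
      using Lam_eq[OF p1] Lam_eq[OF p2] by (simp add: dist_norm d1_def d2_def J1_def J2_def)
    also have "\<dots> \<le> C * norm ((complex_of_real (sqrt d1) * J1)^2 - (complex_of_real (sqrt d2) * J2)^2)"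
      unfolding C_def by (rule cosh_lip[OF a1 a2])
    also have "(complex_of_real (sqrt d1) * J1)^2 - (complex_of_real (sqrt d2) * J2)^2
        = complex_of_real (d1 - d2) * J1^2 + complex_of_real d2 * ((J1 - J2) * (J1 + J2))"
    proof -
      have s1: "(complex_of_real (sqrt d1) * J1)^2 = complex_of_real d1 * J1^2"
        by (rule sq_eq) (use p1 in \<open>simp add: d1_def\<close>)
      have s2: "(complex_of_real (sqrt d2) * J2)^2 = complex_of_real d2 * J2^2"
        by (rule sq_eq) (use p2 in \<open>simp add: d2_def\<close>)
      show ?thesis unfolding s1 s2 by (simp add: algebra_simps power2_eq_square)
    qed
    also have "norm \<dots> \<le> \<bar>d1 - d2\<bar> * norm J1 ^ 2 + d2 * (norm (J1 - J2) * norm (J1 + J2))"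
      using d2b by (intro order_trans[OF norm_triangle_ineq] add_mono) (auto simp: norm_mult norm_power simp del: of_real_diff)
    also have "\<dots> \<le> (2 * D) * M^2 + 1 * ((KJ * D) * (M + M))"
    proof (intro add_mono mult_mono)
      show "norm J1 ^ 2 \<le> M^2" using J1b by (intro power_mono) auto
      show "norm (J1 + J2) \<le> M + M" using J1b J2b norm_triangle_ineq[of J1 J2] by linarith
    qed (use dd d2b JL D0 KJ0 M0 in auto)
    finally have "dist (Lam c lam r1 x1) (Lam c lam r2 x2) \<le> C * ((2 * D) * M^2 + 1 * ((KJ * D) * (M + M)))"
      using C0 by (simp add: mult_left_mono)
    also have "\<dots> = C * (2 * M^2 + 2 * M * KJ) * D" by (simp add: algebra_simps)
    finally show "dist ((\<lambda>(r, x). Lam c lam r x) p) ((\<lambda>(r, x). Lam c lam r x) q) \<le> C * (2 * M^2 + 2 * M * KJ) * dist p q"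
      using p q by (simp add: D_def)
  qed
  thus ?thesis by blast
qed

lemma Lam_lim:
  assumes r0: "r0 \<in> {R..1}"
  shows "((\<lambda>(s, x). Lam c lam s x) \<longlongrightarrow> 1) (at (r0, r0) within {(s, x). R \<le> x \<and> x < s \<and> s \<le> 1})"
proof -
  obtain Bp Kp where BK: "Bp \<ge> 0" "Kp \<ge> 0"
    "\<And>p. p \<in> {R..1} \<times> {R..1} \<Longrightarrow> norm (psi p) \<le> Bp"
    "\<And>p q. p \<in> {R..1} \<times> {R..1} \<Longrightarrow> q \<in> {R..1} \<times> {R..1} \<Longrightarrow> norm (psi p - psi q) \<le> Kp * dist p q"
    using psi_BK by blast
  define M where "M = 2 * Bp"
  define C where "C = exp M ^ 2 / 2"
  have M0: "M \<ge> 0" and C0: "C \<ge> 0" using BK by (auto simp: M_def C_def)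
  define K where "K = 2 * C * M^2 + 1"
  have "2 * C * M^2 \<ge> 0" using C0 by simp
  hence K0: "K > 0" by (simp add: K_def)
  show ?thesis unfolding Lim_within
  proof (intro allI impI)
    fix e :: real assume e: "e > 0"
    show "\<exists>\<delta>>0. \<forall>y\<in>{(s, x). R \<le> x \<and> x < s \<and> s \<le> 1}. 0 < dist y (r0, r0) \<and> dist y (r0, r0) < \<delta> \<longrightarrow>
        dist ((\<lambda>(s, x). Lam c lam s x) y) 1 < e"
    proof (intro exI conjI ballI impI)
      show "e / K > 0" using e K0 by simp
      fix y assume yT: "y \<in> {(s, x). R \<le> x \<and> x < s \<and> s \<le> 1}" and yd: "0 < dist y (r0, r0) \<and> dist y (r0, r0) < e / K"
      obtain s x where y: "y = (s, x)" by (cases y)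
      have p: "R \<le> x" "x < s" "s \<le> 1" using yT y by auto
      define D where "D = dist (s, x) (r0, r0)"
      have ds: "\<bar>s - r0\<bar> \<le> D" using dist_fst_le[of "(s, x)" "(r0, r0)"] by (simp add: dist_real_def D_def)
      have dx: "\<bar>x - r0\<bar> \<le> D" using dist_snd_le[of "(s, x)" "(r0, r0)"] by (simp add: dist_real_def D_def)
      have dsx: "s - x \<le> 2 * D" using ds dx by linarith
      have Jb: "norm (J s x) \<le> M" unfolding M_def by (rule J_bound) (use p BK(3) in auto)
      have a: "norm (complex_of_real (sqrt (s - x)) * J s x) \<le> M" by (rule a_bound[OF p Jb])
      have "dist (Lam c lam s x) 1 = norm (cosh (complex_of_real (sqrt (s - x)) * J s x) - cosh 0)"
        using Lam_eq[OF p] by (simp add: dist_norm)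
      also have "\<dots> \<le> C * norm ((complex_of_real (sqrt (s - x)) * J s x)^2 - 0^2)"
        unfolding C_def by (rule cosh_lip[OF a]) (use M0 in simp)
      also have "norm ((complex_of_real (sqrt (s - x)) * J s x)^2 - 0^2) = (s - x) * norm (J s x)^2"
        using p by (simp add: sq_eq norm_mult norm_power del: of_real_diff)
      also have "\<dots> \<le> (2 * D) * M^2"
        using dsx Jb p by (intro mult_mono power_mono) auto
      finally have "dist (Lam c lam s x) 1 \<le> C * ((2 * D) * M^2)" using C0 by (simp add: mult_left_mono)
      also have "\<dots> \<le> K * D" unfolding K_def using D_def by (simp add: algebra_simps)
      also have "\<dots> < K * (e / K)"
      proof -
        have "D < e / K" using yd y by (simp add: D_def)
        thus ?thesis using mult_strict_left_mono[OF _ K0] by blast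
      qed
      also have "\<dots> = e" using K0 by simp
      finally show "dist ((\<lambda>(s, x). Lam c lam s x) y) 1 < e" using y by simp
    qed
  qed
qed

end

theorem lemma5p2:
  fixes R :: real and c c' :: "real \<Rightarrow> real" and lam :: "real \<Rightarrow> complex"
  assumes R: "0 < R" "R < 1"
    and c_pos: "\<forall>r\<in>{R..1}. c r > 0"
    and c_deriv: "\<forall>r\<in>{R..1}. (c has_real_derivative c' r) (at r within {R..1})"
    and c'_lip: "\<exists>L. L-lipschitz_on {R..1} c'"
    and herglotz: "\<forall>r\<in>{R..1}. \<exists>D>0. ((\<lambda>t. t / c t) has_real_derivative D) (at r within {R..1})"
    and lam_lip: "\<exists>L. L-lipschitz_on {R..1} lam"
  shows "(\<forall>r x. R \<le> x \<and> x < r \<and> r \<le> 1 \<longrightarrow>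
            (\<lambda>u. lam u * complex_of_real (H c u x)) integrable_on {x..r})
    \<and> (\<exists>L. L-lipschitz_on {(r, x). R \<le> x \<and> x < r \<and> r \<le> 1} (\<lambda>(r, x). Lam c lam r x))
    \<and> (\<forall>r\<in>{R..1}. ((\<lambda>(s, x). Lam c lam s x) \<longlongrightarrow> 1)
            (at (r, r) within {(s, x). R \<le> x \<and> x < s \<and> s \<le> 1}))"
proof -
  obtain Lc where Lc: "Lc-lipschitz_on {R..1} c'" using c'_lip by blast
  obtain Ll where Ll: "Ll-lipschitz_on {R..1} lam" using lam_lip by blast
  interpret L: L52 R c c' lam Lc Ll
    by (rule L52.intro) (use R c_pos c_deriv Lc herglotz Ll in auto)
  show ?thesis
  proof (intro conjI allI impI ballI)
    fix r x assume "R \<le> x \<and> x < r \<and> r \<le> 1"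
    thus "(\<lambda>u. lam u * complex_of_real (H c u x)) integrable_on {x..r}"
      using L.J_integral by blast
  next
    show "\<exists>L. L-lipschitz_on {(r, x). R \<le> x \<and> x < r \<and> r \<le> 1} (\<lambda>(r, x). Lam c lam r x)"
      by (rule L.Lam_lip)
  next
    fix r assume "r \<in> {R..1}"
    thus "((\<lambda>(s, x). Lam c lam s x) \<longlongrightarrow> 1) (at (r, r) within {(s, x). R \<le> x \<and> x < s \<and> s \<le> 1})"
      by (rule L.Lam_lim)
  qed
qed


end
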